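(* Let $K$ be a number field and let $(a,b,c)$ be a triplet of positive integers with $c=\mathrm{lcm}(a,b)\cdot t$ for some positive integer $t\mid\gcd(a,b)$. Then $(a,b,c)$ is irreducible (as an element of $\mathcal C_K$) if and only if it is one of $(1,1,1)$, $(1,p,p)$, $(p,1,p)$, $(p,p,p)$ for some prime $p$.
   Context: Extensions are finite and inside a fixed algebraic closure $\bar K$. A triplet $(a,b,c)$ of positive integers is compositum feasible over $K$ if there exist extensions $L/K$, $L'/K$ of degrees $a$ and $b$ whose compositum has degree $c$ over $K$; $\mathcal C_K$ is the set of such triplets (every triplet $(a,b,c)$ with $c=\mathrm{lcm}(a,b)t$, $t\mid\gcd(a,b)$, lies in $\mathcal C_K$ when $K$ is a number field). A triplet $(a,b,c)\in\mathcal C_K$ is reducible if $(a,b,c)=(a_1a_2,b_1b_2,c_1c_2)$ with $(a_1,b_1,c_1),(a_2,b_2,c_2)\in\mathcal C_K\setminus\{(1,1,1)\}$, and irreducible otherwise. *)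

theory Defs
  imports Complex_Main "HOL-Computational_Algebra.Primes"
begin

text \<open>We work inside the fixed algebraic closure given by the complex numbers:
  every number field embeds into \<complex>, and the finite extensions of K inside an
  algebraic closure correspond to the subfields of \<complex> that are finite over K.\<close>

definition subfield_C :: "complex set \<Rightarrow> bool" where
  "subfield_C S \<longleftrightarrow> 0 \<in> S \<and> 1 \<in> S \<and>
     (\<forall>x\<in>S. \<forall>y\<in>S. x + y \<in> S \<and> x - y \<in> S \<and> x * y \<in> S) \<and>
     (\<forall>x\<in>S. x \<noteq> 0 \<longrightarrow> inverse x \<in> S)"

definition ext_degree :: "complex set \<Rightarrow> complex set \<Rightarrow> nat \<Rightarrow> bool" where
  "ext_degree K L n \<longleftrightarrow> subfield_C K \<and> subfield_C L \<and> K \<subseteq> L \<and>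
     (\<exists>v :: nat \<Rightarrow> complex. (\<forall>i<n. v i \<in> L) \<and>
        (\<forall>x\<in>L. \<exists>c. (\<forall>i<n. c i \<in> K) \<and> x = (\<Sum>i<n. c i * v i)) \<and>
        (\<forall>c. (\<forall>i<n. c i \<in> K) \<and> (\<Sum>i<n. c i * v i) = 0 \<longrightarrow> (\<forall>i<n. c i = 0)))"

definition number_field :: "complex set \<Rightarrow> bool" where
  "number_field K \<longleftrightarrow> (\<exists>n. ext_degree (\<rat> :: complex set) K n)"

definition compositum :: "complex set \<Rightarrow> complex set \<Rightarrow> complex set" where
  "compositum L L' = \<Inter> {F. subfield_C F \<and> L \<union> L' \<subseteq> F}"

definition compositum_feasible :: "complex set \<Rightarrow> (nat \<times> nat \<times> nat) set" where
  "compositum_feasible K = {(a, b, c). \<exists>L L'. ext_degree K L a \<and> ext_degree K L' b \<and>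
       ext_degree K (compositum L L') c}"

definition triplet_mult :: "nat \<times> nat \<times> nat \<Rightarrow> nat \<times> nat \<times> nat \<Rightarrow> nat \<times> nat \<times> nat" where
  "triplet_mult x y = (case x of (a1, b1, c1) \<Rightarrow> case y of (a2, b2, c2) \<Rightarrow> (a1 * a2, b1 * b2, c1 * c2))"

definition triplet_reducible :: "complex set \<Rightarrow> nat \<times> nat \<times> nat \<Rightarrow> bool" where
  "triplet_reducible K x \<longleftrightarrow> x \<in> compositum_feasible K \<and>
     (\<exists>y z. y \<in> compositum_feasible K - {(1, 1, 1)} \<and> z \<in> compositum_feasible K - {(1, 1, 1)} \<and>
            x = triplet_mult y z)"

definition triplet_irreducible :: "complex set \<Rightarrow> nat \<times> nat \<times> nat \<Rightarrow> bool" where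
  "triplet_irreducible K x \<longleftrightarrow> x \<in> compositum_feasible K \<and> \<not> triplet_reducible K x"

end

theory Submission
  imports Defs "HOL-Algebra.Finite_Extensions" "HOL-Computational_Algebra.Fundamental_Theorem_Algebra"
begin

hide_const (open) Divisibility.prime


definition CR :: "complex ring" where
  "CR = \<lparr>carrier = UNIV, monoid.mult = (\<lambda>x y. x * y), one = 1, ring.zero = 0, add = (\<lambda>x y. x + y)\<rparr>"

lemma CR_simps [simp]:
  "carrier CR = UNIV" "mult CR = (\<lambda>x y. x * y)" "one CR = 1" "zero CR = 0" "add CR = (\<lambda>x y. x + y)"
  by (simp_all add: CR_def)

lemma field_CR: "field CR"
proof -
  have "\<exists>y. x + y = 0" for x :: complex
    using add.right_inverse by blast
  moreover have "x \<noteq> 0 \<Longrightarrow> \<exists>y. x * y = 1" for x :: complex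
    by (rule exI[of _ "inverse x"]) auto
  ultimately show ?thesis
    unfolding CR_def using add.right_inverse
    by unfold_locales (auto simp:algebra_simps Units_def)
qed

interpretation C: domain CR by (rule field.axioms(1)[OF field_CR])

lemma CR_a_inv [simp]: "a_inv CR x = - x"
  by (rule C.minus_equality) auto

lemma CR_minus [simp]: "a_minus CR x y = x - y"
  by (simp add: a_minus_def)

lemma CR_pow [simp]: "x [^]\<^bsub>CR\<^esub> (n::nat) = x ^ n"
  by (induction n) (auto simp: mult.commute)

lemma CR_inv [simp]: "x \<noteq> 0 \<Longrightarrow> m_inv CR x = inverse x"
  using C.inv_unique'[of x "inverse x"] field.field_Units[OF field_CR] by (simp add: m_inv_def)

lemma subfield_C_iff: "subfield_C S \<longleftrightarrow> subfield S CR"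
proof
  assume S: "subfield_C S"
  have "subring S CR"
    using S unfolding subfield_C_def
    apply (intro C.subringI)
        apply auto
    done
  moreover have "inv\<^bsub>CR\<^esub> k \<in> S" if "k \<in> S - {\<zero>\<^bsub>CR\<^esub>}" for k
    using that S unfolding subfield_C_def by auto
  ultimately show "subfield S CR" by (rule field.subfieldI'[OF field_CR])
next
  assume S: "subfield S CR"
  have sr: "subring S CR" using subfieldE(1)[OF S] .
  have "0 \<in> S" "1 \<in> S" using subringE(2,3)[OF sr] by auto
  moreover have "x + y \<in> S" "x * y \<in> S" "- x \<in> S" if "x \<in> S" "y \<in> S" for x y
    using subringE(5,6,7)[OF sr] that by auto
  moreover have "x - y \<in> S" if "x \<in> S" "y \<in> S" for x y
    using calculation that by (metis diff_conv_add_uminus)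
  moreover have "inverse x \<in> S" if "x \<in> S" "x \<noteq> 0" for x
  proof -
    have "x \<in> Units (CR\<lparr>carrier := S\<rparr>)" using subfield.subfield_Units[OF S] that by auto
    then obtain y where "y \<in> S" "x * y = 1" unfolding Units_def by auto
    thus ?thesis by (metis mult.commute nonzero_divide_eq_eq divide_inverse mult_1 that(2))
  qed
  ultimately show "subfield_C S" unfolding subfield_C_def by auto
qed

lemma carrier_CR_sub: "(A \<subseteq> carrier CR) = True" by simp

lemma combine_sum:
  "C.combine Ks Us = (\<Sum>i < min (length Ks) (length Us). Ks!i * Us!i)"
proof (induction Ks arbitrary: Us)
  case Nil then show ?case by simp
next
  case (Cons k Ks)
  then show ?case
  proof (cases Us)
    case Nil then show ?thesis by simp
  next
    case (Cons u Us')
    have "min (length (k # Ks)) (length Us) = Suc (min (length Ks) (length Us'))"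
      using Cons by simp
    then show ?thesis using Cons \<open>\<And>Us. C.combine Ks Us = _\<close>[of Us']
      by (simp only: sum.lessThan_Suc_shift) simp
  qed
qed

lemma combine_map_sum:
  "C.combine (map c [0..<n]) (map v [0..<n]) = (\<Sum>i<n. c i * v i)"
  by (simp add: combine_sum)

lemma subring_sum_closed:
  assumes "subring S CR" "\<And>i. i < (n::nat) \<Longrightarrow> f i \<in> S"
  shows "(\<Sum>i<n. f i) \<in> S"
  using assms(2)
proof (induction n)
  case 0 then show ?case using subringE(2)[OF assms(1)] by simp
next
  case (Suc n) then show ?case using subringE(7)[OF assms(1)] by simp
qed

lemma ext_degree_iff:
  "ext_degree K L n \<longleftrightarrow> subfield K CR \<and> subfield L CR \<and> K \<subseteq> L \<and> C.dimension n K L"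
proof
  assume H: "ext_degree K L n"
  then have K: "subfield K CR" and L: "subfield L CR" and KL: "K \<subseteq> L"
    unfolding ext_degree_def subfield_C_iff by auto
  from H obtain v where v: "\<forall>i<n. v i \<in> L"
    "\<forall>x\<in>L. \<exists>c. (\<forall>i<n. c i \<in> K) \<and> x = (\<Sum>i<n. c i * v i)"
    "\<forall>c. (\<forall>i<n. c i \<in> K) \<and> (\<Sum>i<n. c i * v i) = 0 \<longrightarrow> (\<forall>i<n. c i = 0)"
    unfolding ext_degree_def by blast
  define Us where "Us = map v [0..<n]"
  have lenUs: "length Us = n" by (simp add: Us_def)
  have cU: "set Us \<subseteq> carrier CR" by simp
  have ind: "C.independent K Us"
  proof (rule C.trivial_combine_imp_independent[OF K])
    show "set Us \<subseteq> carrier CR" by simp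
    fix Ks assume Ks: "set Ks \<subseteq> K" "C.combine Ks Us = \<zero>\<^bsub>CR\<^esub>"
    define c where "c i = (if i < length Ks then Ks ! i else 0)" for i
    have cK: "\<forall>i<n. c i \<in> K"
      using Ks(1) subringE(2)[OF subfieldE(1)[OF K]] unfolding c_def by auto
    have "(\<Sum>i<n. c i * v i) = (\<Sum>i < min (length Ks) n. Ks!i * v i)"
    proof -
      have "(\<Sum>i<n. c i * v i) = (\<Sum>i \<in> {..<min (length Ks) n}. c i * v i)"
        by (rule sum.mono_neutral_right) (auto simp: c_def)
      also have "\<dots> = (\<Sum>i < min (length Ks) n. Ks!i * v i)"
        by (rule sum.cong) (auto simp: c_def)
      finally show ?thesis .
    qed
    also have "\<dots> = C.combine Ks Us"
      unfolding combine_sum Us_def by (intro sum.cong) auto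
    finally have "(\<Sum>i<n. c i * v i) = 0" using Ks(2) by simp
    then have "\<forall>i<n. c i = 0" using v(3) cK by blast
    then show "set (take (length Us) Ks) \<subseteq> {\<zero>\<^bsub>CR\<^esub>}"
      by (auto simp: lenUs c_def set_conv_nth)
  qed
  have span: "C.Span K Us = L"
  proof
    show "C.Span K Us \<subseteq> L"
    proof
      fix x assume xS: "x \<in> C.Span K Us"
      obtain Ks where Ks: "set Ks \<subseteq> K" "length Ks = n" "x = C.combine Ks Us"
        using C.Span_mem_iff_length_version[OF K cU, of x] xS lenUs by blast
      have "C.combine Ks Us = (\<Sum>i<n. Ks!i * v i)"
        unfolding combine_sum Us_def using Ks(2) by (intro sum.cong) auto
      then have "x = (\<Sum>i<n. Ks!i * v i)" using Ks(3) by simp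
      also have "\<dots> \<in> L"
      proof (rule subring_sum_closed[OF subfieldE(1)[OF L]])
        fix i assume i: "i < n"
        then have "Ks ! i \<in> L" using Ks(1,2) KL nth_mem by blast
        then show "Ks ! i * v i \<in> L"
          using subringE(6)[OF subfieldE(1)[OF L]] v(1) i by simp
      qed
      finally show "x \<in> L" .
    qed
  next
    show "L \<subseteq> C.Span K Us"
    proof
      fix x assume "x \<in> L"
      then obtain c where c: "\<forall>i<n. c i \<in> K" "x = (\<Sum>i<n. c i * v i)" using v(2) by blast
      have "x = C.combine (map c [0..<n]) Us" using c by (simp add: combine_map_sum Us_def)
      moreover have "set (map c [0..<n]) \<subseteq> K" using c by auto
      ultimately show "x \<in> C.Span K Us"
        unfolding C.Span_mem_iff_length_version[OF K cU] using lenUs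
        by (intro exI[of _ "map c [0..<n]"]) simp
    qed
  qed
  have "C.dimension n K L" using C.dimensionI[OF K ind span] lenUs by simp
  then show "subfield K CR \<and> subfield L CR \<and> K \<subseteq> L \<and> C.dimension n K L"
    using K L KL by simp
next
  assume H: "subfield K CR \<and> subfield L CR \<and> K \<subseteq> L \<and> C.dimension n K L"
  then have K: "subfield K CR" and L: "subfield L CR" and KL: "K \<subseteq> L" and d: "C.dimension n K L"
    by auto
  obtain Vs where Vs: "C.independent K Vs" "length Vs = n" "C.Span K Vs = L"
    using C.exists_base[OF K d] by auto
  define v where "v i = Vs ! i" for i
  have cV: "set Vs \<subseteq> carrier CR" by simp
  have "\<forall>i<n. v i \<in> L"
    using C.Span_base_incl[OF K, of Vs] Vs unfolding v_def by auto
  moreover have "\<forall>x\<in>L. \<exists>c. (\<forall>i<n. c i \<in> K) \<and> x = (\<Sum>i<n. c i * v i)"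
  proof
    fix x assume "x \<in> L"
    then obtain Ks where Ks: "set Ks \<subseteq> K" "length Ks = n" "x = C.combine Ks Vs"
      using C.Span_mem_iff_length_version[OF K cV, of x] Vs \<open>x \<in> L\<close> by blast
    show "\<exists>c. (\<forall>i<n. c i \<in> K) \<and> x = (\<Sum>i<n. c i * v i)"
      by (rule exI[of _ "\<lambda>i. Ks ! i"]) (use Ks Vs in \<open>auto simp: combine_sum v_def intro!: sum.cong\<close>)
  qed
  moreover have "\<forall>c. (\<forall>i<n. c i \<in> K) \<and> (\<Sum>i<n. c i * v i) = 0 \<longrightarrow> (\<forall>i<n. c i = 0)"
  proof (rule allI, rule impI)
    fix c assume c: "(\<forall>i<n. c i \<in> K) \<and> (\<Sum>i<n. c i * v i) = 0"
    have Vs_eq: "Vs = map v [0..<n]" using map_nth[of Vs] Vs(2) unfolding v_def by simp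
    have "C.combine (map c [0..<n]) Vs = \<zero>\<^bsub>CR\<^esub>"
      using c by (simp add: Vs_eq combine_map_sum)
    moreover have "set (map c [0..<n]) \<subseteq> K" using c by auto
    ultimately have "set (take (length Vs) (map c [0..<n])) \<subseteq> {\<zero>\<^bsub>CR\<^esub>}"
      using C.independent_imp_trivial_combine[OF K Vs(1)] by blast
    then show "\<forall>i<n. c i = 0" using Vs(2) by (auto simp: image_subset_iff)
  qed
  ultimately show "ext_degree K L n"
    using K L KL unfolding ext_degree_def subfield_C_iff by blast
qed


lemma eval_poly_CR: "C.eval p x = poly (Poly (rev p)) x"
proof (induction p)
  case Nil then show ?case by simp
next
  case (Cons a p)
  have "C.eval (a # p) x = a * x ^ length p + C.eval p x" by simp
  moreover have "poly (Poly (rev (a # p))) x = poly (Poly (rev p)) x + x ^ length p * a"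
    by (simp add: Poly_append poly_monom)
  ultimately show ?case using Cons by (simp add: mult.commute)
qed

lemma coeffs_Poly_rev:
  assumes "p \<noteq> []" "hd p \<noteq> 0"
  shows "coeffs (Poly (rev p)) = rev p"
  using assms by (cases p) (auto simp: coeffs_Poly strip_while_def)

lemma Poly_rev_props:
  assumes "p \<noteq> []" "hd p \<noteq> 0"
  shows "Polynomial.degree (Poly (rev p)) = length p - 1"
    and "Polynomial.lead_coeff (Poly (rev p)) = hd p"
    and "Polynomial.coeff (Poly (rev p)) 0 = last p"
    and "Poly (rev p) \<noteq> 0"
proof -
  have c: "coeffs (Poly (rev p)) = rev p" by (rule coeffs_Poly_rev[OF assms])
  show d: "Polynomial.degree (Poly (rev p)) = length p - 1"
    using c by (simp add: degree_eq_length_coeffs)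
  show "Polynomial.lead_coeff (Poly (rev p)) = hd p"
    using c assms by (metis last_coeffs_eq_coeff_degree last_rev coeffs_eq_Nil rev_is_Nil_conv)
  show "Polynomial.coeff (Poly (rev p)) 0 = last p"
    using assms(1) by (simp add: nth_default_def hd_rev[symmetric] hd_conv_nth)
  show "Poly (rev p) \<noteq> 0" using c assms(1) by (metis coeffs_eq_Nil rev_is_Nil_conv)
qed

lemma prod_mset_uminus: "(\<Prod>x\<in>#A. - (x::complex)) = (-1) ^ size A * prod_mset A"
  by (induction A) auto

lemma prod_mset_pow:
  assumes "\<And>x. x \<in># A \<Longrightarrow> (x::complex) ^ N = s"
  shows "(prod_mset A) ^ N = s ^ size A"
  using assms by (induction A) (auto simp: power_mult_distrib)

lemma subring_pow_closed:
  assumes "subring S CR" "x \<in> S" shows "x ^ n \<in> S"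
  using assms subringE(3,6)[OF assms(1)] by (induction n) auto

lemma subring_neg1: "subring S CR \<Longrightarrow> -1 \<in> S"
  using subringE(3,5) by fastforce

lemma CL:
  assumes F: "subfield F CR" and s: "\<sigma> \<in> F" and N: "0 < N" and t: "\<tau> ^ N = \<sigma>"
  shows "(C.algebraic over F) \<tau>"
    and "1 \<le> Polynomials.degree (C.Irr F \<tau>)"
    and "Polynomials.degree (C.Irr F \<tau>) \<le> N"
    and "\<exists>P\<in>F. P ^ N = \<sigma> ^ Polynomials.degree (C.Irr F \<tau>)"
proof -
  have sr: "subring F CR" using subfieldE(1)[OF F] .
  define q where "q = 1 # replicate (N - 1) 0 @ [- \<sigma>]"
  have q_len: "length q = N + 1" using N by (simp add: q_def)
  have q_car: "q \<in> carrier (univ_poly CR F)"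
    unfolding univ_poly_carrier[symmetric] polynomial_def q_def
    using s subringE(2,3)[OF sr] subring_neg1[OF sr] subringE(5)[OF sr] by auto
  have q_ne: "q \<noteq> []" by (simp add: q_def)
  have q_eval: "C.eval q x = x ^ N - \<sigma>" for x
  proof -
    have "C.eval (replicate (N - 1) \<zero>\<^bsub>CR\<^esub> @ [- \<sigma>]) x = C.eval [- \<sigma>] x"
      by (rule C.eval_replicate) auto
    then have "C.eval (replicate (N - 1) 0 @ [- \<sigma>]) x = - \<sigma>" by simp
    moreover have "length (replicate (N - 1) (0::complex) @ [- \<sigma>]) = N" using N by simp
    ultimately show ?thesis unfolding q_def by simp
  qed
  have alg: "(C.algebraic over F) \<tau>"
    by (rule C.algebraicI[OF q_car q_ne]) (simp add: q_eval t)
  then show "(C.algebraic over F) \<tau>" .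
  have Irr_car: "C.Irr F \<tau> \<in> carrier (univ_poly CR F)"
    and Irr_lead: "hd (C.Irr F \<tau>) = 1"
    and Irr_root: "C.eval (C.Irr F \<tau>) \<tau> = 0"
    using C.IrrE[OF F _ alg] by auto
  have Irr_ne: "C.Irr F \<tau> \<noteq> []"
    using C.IrrE(1-2)[OF F _ alg] unfolding ring_irreducible_def univ_poly_zero by auto
  have Irr_set: "set (C.Irr F \<tau>) \<subseteq> F"
    using Irr_car Irr_ne unfolding univ_poly_carrier[symmetric] polynomial_def by auto
  have dvd: "C.Irr F \<tau> pdivides\<^bsub>CR\<^esub> q"
    by (rule C.Irr_minimal[OF F _ alg q_car]) (simp_all add: q_eval t)
  have "Polynomials.degree (C.Irr F \<tau>) \<le> Polynomials.degree q"
    by (rule C.pdivides_imp_degree_le[OF sr Irr_car q_car q_ne dvd])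
  then show degle: "Polynomials.degree (C.Irr F \<tau>) \<le> N" using q_len by simp
  obtain r where q_eq: "q = C.poly_mult (C.Irr F \<tau>) r"
    using dvd unfolding pdivides_def factor_def univ_poly_mult by blast
  have roots: "x ^ N = \<sigma>" if "C.eval (C.Irr F \<tau>) x = 0" for x
  proof -
    have "C.eval q x = C.eval (C.Irr F \<tau>) x * C.eval r x"
      using C.eval_poly_mult[of "C.Irr F \<tau>" r x] q_eq by simp
    then show ?thesis using that q_eval[of x] by simp
  qed
  define m where "m = Polynomials.degree (C.Irr F \<tau>)"
  show deg1: "1 \<le> Polynomials.degree (C.Irr F \<tau>)"
  proof (rule ccontr)
    assume "\<not> 1 \<le> Polynomials.degree (C.Irr F \<tau>)"
    then have "length (C.Irr F \<tau>) = 1" using Irr_ne by (cases "C.Irr F \<tau>") (auto simp: not_less_eq_eq)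
    then have "C.Irr F \<tau> = [1]" using Irr_lead by (cases "C.Irr F \<tau>") auto
    then show False using Irr_root by simp
  qed
  define cp where "cp = Poly (rev (C.Irr F \<tau>))"
  have cp_deg: "Polynomial.degree cp = m" and cp_lead: "Polynomial.lead_coeff cp = 1"
    and cp_0: "Polynomial.coeff cp 0 = last (C.Irr F \<tau>)" and cp_ne: "cp \<noteq> 0"
    using Poly_rev_props[OF Irr_ne] Irr_lead unfolding cp_def m_def by auto
  obtain A where A: "size A = Polynomial.degree cp"
    "cp = smult (Polynomial.lead_coeff cp) (\<Prod>x\<in>#A. [:-x, 1:])"
    using alg_closed_imp_factorization[OF cp_ne] by blast
  have cpA: "cp = (\<Prod>x\<in>#A. [:-x, 1:])" using A(2) cp_lead by simp
  have rootsA: "x ^ N = \<sigma>" if "x \<in># A" for x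
  proof -
    have "poly cp x = 0" unfolding cpA poly_prod_mset
      using that by (force simp: prod_mset_zero_iff)
    then have "C.eval (C.Irr F \<tau>) x = 0" by (simp add: eval_poly_CR cp_def)
    then show ?thesis by (rule roots)
  qed
  have PN: "(prod_mset A) ^ N = \<sigma> ^ m"
    using prod_mset_pow[OF rootsA] A(1) cp_deg by simp
  have "poly cp 0 = (-1) ^ m * prod_mset A"
    unfolding cpA poly_prod_mset using A(1) cp_deg by (simp add: prod_mset_uminus)
  moreover have "poly cp 0 = last (C.Irr F \<tau>)" using cp_0 by (simp add: poly_0_coeff_0)
  ultimately have "prod_mset A = (-1) ^ m * last (C.Irr F \<tau>)"
    by (metis (no_types, lifting) mult.assoc mult_1 power_minus1_even power_mult_distrib[symmetric]
        semiring_norm(2) power_add[symmetric] mult_2 power_mult)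
  moreover have "(-1) ^ m * last (C.Irr F \<tau>) \<in> F"
  proof -
    have "last (C.Irr F \<tau>) \<in> F" using Irr_set Irr_ne last_in_set by blast
    then show ?thesis using subringE(6)[OF sr] subring_pow_closed[OF sr subring_neg1[OF sr]] by simp
  qed
  ultimately show "\<exists>P\<in>F. P ^ N = \<sigma> ^ Polynomials.degree (C.Irr F \<tau>)"
    using PN unfolding m_def by metis
qed



lemma Rats_subfield: "subfield (\<rat> :: complex set) CR"
  unfolding subfield_C_iff[symmetric] subfield_C_def by auto

lemma subfield_div_closed:
  assumes "subfield F CR" "x \<in> F" "y \<in> F" shows "x / y \<in> F"
proof (cases "y = 0")
  case True then show ?thesis using subringE(2)[OF subfieldE(1)[OF assms(1)]] by simp
next
  case False
  then have "inverse y \<in> F" using assms unfolding subfield_C_iff[symmetric] subfield_C_def by auto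
  then show ?thesis using assms unfolding subfield_C_iff[symmetric] subfield_C_def
    by (simp add: divide_inverse)
qed

lemma rat_pow_two:
  assumes P: "(P::complex) \<in> \<rat>" and e: "P ^ N = 2 ^ m" and m: "1 \<le> m" "m \<le> N"
  shows "m = N"
proof -
  obtain a b :: int where ab: "0 < b" "P = of_int a / of_int b"
  proof (rule Rats_cases'[OF P])
    fix a b :: int assume "0 < b" "coprime a b" "P = of_int a / of_int b"
    then show thesis using that by blast
  qed
  have "(of_int b :: complex) \<noteq> 0" using ab(1) by simp
  then have "(of_int a :: complex) = P * of_int b" using ab(2) by simp
  then have "(of_int a :: complex) ^ N = 2 ^ m * of_int b ^ N"
    using e by (simp add: power_mult_distrib)
  then have "(of_int (a ^ N) :: complex) = of_int (2 ^ m * b ^ N)" by simp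
  then have eq: "a ^ N = 2 ^ m * b ^ N" by (simp only: of_int_eq_iff)
  have b0: "b \<noteq> 0" using ab by simp
  have a0: "a \<noteq> 0"
  proof
    assume "a = 0"
    moreover have "0 < N" using m by simp
    ultimately have "2 ^ m * b ^ N = 0" using eq by (simp add: power_0_left)
    then show False using b0 by simp
  qed
  have pr: "prime_elem (2::int)" by simp
  have m1: "multiplicity 2 (a ^ N) = N * multiplicity 2 a"
    by (rule prime_elem_multiplicity_power_distrib[OF pr a0])
  have m2: "multiplicity 2 ((2::int) ^ m * b ^ N) = multiplicity 2 ((2::int) ^ m) + multiplicity 2 (b ^ N)"
    by (rule prime_elem_multiplicity_mult_distrib[OF pr]) (use b0 in simp_all)
  have m3: "multiplicity 2 ((2::int) ^ m) = m"
    by (rule multiplicity_prime_power[OF pr])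
  have m4: "multiplicity 2 (b ^ N) = N * multiplicity 2 b"
    by (rule prime_elem_multiplicity_power_distrib[OF pr b0])
  have eqm: "N * multiplicity 2 a = m + N * multiplicity (2::int) b"
    using m1 m2 m3 m4 eq by simp
  have "N dvd m + N * multiplicity (2::int) b" unfolding eqm[symmetric] by simp
  then have "N dvd m" using dvd_add_left_iff[of N "N * multiplicity (2::int) b" m] by simp
  then show ?thesis using m by (auto dest: dvd_imp_le)
qed

lemma chain_bound:
  assumes F: "subfield F CR" and QF: "\<rat> \<subseteq> F" and d: "C.dimension d \<rat> F"
    and s: "\<sigma> \<in> F" and e: "\<sigma> ^ N = 2" and N: "0 < N"
  shows "N \<le> d"
proof -
  have Q: "subfield (\<rat> :: complex set) CR" by (rule Rats_subfield)
  have two: "(2::complex) \<in> \<rat>" by simp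
  note cl = CL[OF Q two N e]
  obtain P :: complex where P: "P \<in> \<rat>" "P ^ N = 2 ^ Polynomials.degree (C.Irr \<rat> \<sigma>)"
    by (rule bexE[OF cl(4)])
  define m where "m = Polynomials.degree (C.Irr \<rat> \<sigma>)"
  have mN: "m = N" unfolding m_def by (rule rat_pow_two[OF P cl(2,3)])
  have ind: "C.independent \<rat> (C.exp_base \<sigma> m)"
    unfolding m_def by (rule C.exp_base_independent[OF Q _ cl(1)]) simp
  have sub: "set (C.exp_base \<sigma> m) \<subseteq> F"
    using subring_pow_closed[OF subfieldE(1)[OF F] s] by (auto simp: C.exp_base_def)
  have "length (C.exp_base \<sigma> m) \<le> d"
    by (rule C.independent_length_le_dimension[OF Q d ind sub])
  then show ?thesis using mN by (simp add: C.exp_base_def)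
qed

lemma prime_ext:
  assumes F: "subfield F CR" and QF: "\<rat> \<subseteq> F" and d: "C.dimension d \<rat> F"
    and p: "prime (p::nat)"
  shows "\<exists>\<tau>. (C.algebraic over F) \<tau> \<and> C.dimension p F (C.simple_extension F \<tau>)"
proof -
  have p1: "1 < p" using p prime_gt_1_nat by blast
  define J where "J = {j. \<exists>\<sigma>\<in>F. \<sigma> ^ (p ^ j) = 2}"
  have "0 \<in> J" unfolding J_def using QF by (auto intro!: bexI[of _ 2])
  have Jb: "j < d" if jJ': "j \<in> J" for j
  proof -
    obtain \<sigma> where "\<sigma> \<in> F" "\<sigma> ^ (p ^ j) = 2" using jJ' unfolding J_def by blast
    then have "p ^ j \<le> d" using chain_bound[OF F QF d] p1 by simp
    moreover have "j < p ^ j"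
    proof -
      have "j < 2 ^ j" by (rule less_exp)
      moreover have "(2::nat) ^ j \<le> p ^ j" using p1 by (simp add: power_mono)
      ultimately show ?thesis by linarith
    qed
    ultimately show ?thesis by linarith
  qed
  have finJ: "finite J" using Jb by (meson finite_nat_set_iff_bounded)
  define j where "j = Max J"
  have jJ: "j \<in> J" using Max_in[OF finJ] \<open>0 \<in> J\<close> unfolding j_def by blast
  have jmax: "Suc j \<notin> J" using Max_ge[OF finJ, of "Suc j"] unfolding j_def by auto
  obtain \<sigma> where s: "\<sigma> \<in> F" "\<sigma> ^ (p ^ j) = 2" using jJ unfolding J_def by blast
  have s0: "\<sigma> \<noteq> 0" using s(2) p1 by (cases "\<sigma> = 0") (auto simp: power_0_left)
  have p0: "0 < p" using p1 by simp
  obtain \<tau> where t: "\<tau> ^ p = \<sigma>" using nth_root_exists[OF p0, of \<sigma>] by blast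
  note cl = CL[OF F s(1) p0 t]
  define m where "m = Polynomials.degree (C.Irr F \<tau>)"
  obtain P where P: "P \<in> F" "P ^ p = \<sigma> ^ m" using cl(4) unfolding m_def by blast
  have "m = p"
  proof (rule ccontr)
    assume "m \<noteq> p"
    then have mlt: "m < p" using cl(3) unfolding m_def by simp
    have m1: "1 \<le> m" using cl(2) unfolding m_def .
    have "\<not> p dvd m" using mlt m1 by (auto dest: dvd_imp_le)
    then obtain u v where uv: "m * u = Suc (p * v)" using bezout_prime[OF p] by blast
    define w where "w = P ^ u / \<sigma> ^ v"
    have wF: "w \<in> F" unfolding w_def
      using subfield_div_closed[OF F] subring_pow_closed[OF subfieldE(1)[OF F]] P(1) s(1) by simp
    have "w ^ p = (P ^ p) ^ u / (\<sigma> ^ p) ^ v" unfolding w_def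
      by (simp add: power_divide power_mult[symmetric] mult.commute)
    also have "\<dots> = \<sigma> ^ (m * u) / \<sigma> ^ (p * v)" using P(2) by (simp add: power_mult)
    also have "\<dots> = \<sigma>" using uv s0 by (simp add: power_Suc)
    finally have "w ^ p = \<sigma>" .
    then have "w ^ (p ^ Suc j) = 2" using s(2) by (metis power_Suc power_mult)
    then have "Suc j \<in> J" unfolding J_def using wF by blast
    then show False using jmax by simp
  qed
  then have "C.dimension p F (C.simple_extension F \<tau>)"
    using C.dimension_simple_extension[OF F _ cl(1)] unfolding m_def by simp
  then show ?thesis using cl(1) by blast
qed



lemma finext_nil [simp]: "C.finite_extension F [] = F" by simp

lemma finext_snoc: "C.finite_extension F (xs @ [t]) = C.finite_extension (C.simple_extension F t) xs"
  by (simp add: foldr_append)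

lemma univ_poly_carrier_mono:
  assumes "p \<in> carrier (univ_poly CR A)" "A \<subseteq> B" shows "p \<in> carrier (univ_poly CR B)"
  using assms unfolding univ_poly_carrier[symmetric] polynomial_def by auto

lemma ext_exists:
  assumes "subfield F CR" "\<rat> \<subseteq> F" "C.finite_dimension \<rat> F" "0 < n"
  shows "\<exists>xs. (\<forall>x\<in>set xs. (C.algebraic over F) x) \<and> C.dimension n F (C.finite_extension F xs)"
  using assms
proof (induction n arbitrary: F rule: less_induct)
  case (less n F)
  have F: "subfield F CR" and QF: "\<rat> \<subseteq> F" and fd: "C.finite_dimension \<rat> F" and n0: "0 < n"
    using less.prems by auto
  show ?case
  proof (cases "n = 1")
    case True
    then show ?thesis using C.dimension_one[OF F] by (intro exI[of _ "[]"]) simp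
  next
    case False
    then obtain p where p: "prime p" "p dvd n" using prime_factor_nat by blast
    then obtain k where k: "n = p * k" by blast
    have p1: "1 < p" using p(1) prime_gt_1_nat by blast
    have k0: "0 < k" using k n0 by (cases k) auto
    have kn: "k < n" using k p1 k0 by simp
    obtain d where d: "C.dimension d \<rat> F" using fd unfolding C.finite_dimension_def by blast
    obtain t where t: "(C.algebraic over F) t" "C.dimension p F (C.simple_extension F t)"
      using prime_ext[OF F QF d p(1)] by blast
    define E where "E = C.simple_extension F t"
    have E: "subfield E CR" unfolding E_def using C.simple_extension_is_subfield[OF F _] t(1) by simp
    have FE: "F \<subseteq> E" unfolding E_def by (rule C.simple_extension_incl) auto
    have dE: "C.dimension (d * p) \<rat> E"
      using C.telescopic_base[OF Rats_subfield F d t(2)] unfolding E_def .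
    have fdE: "C.finite_dimension \<rat> E" using dE unfolding C.finite_dimension_def by blast
    obtain xs where xs: "\<forall>x\<in>set xs. (C.algebraic over E) x" "C.dimension k E (C.finite_extension E xs)"
      using less.IH[OF kn E _ fdE k0] QF FE by blast
    have dim: "C.dimension n F (C.finite_extension F (xs @ [t]))"
      unfolding finext_snoc k using C.telescopic_base[OF F E t(2)[folded E_def] xs(2)] unfolding E_def .
    have fdim: "C.finite_dimension F (C.finite_extension E xs)"
      using dim unfolding finext_snoc E_def C.finite_dimension_def by blast
    have sr: "subring (C.finite_extension E xs) CR"
      by (rule C.finite_extension_is_subring[OF subfieldE(1)[OF E]]) simp
    have "(C.algebraic over F) x" if "x \<in> set xs" for x
    proof -
      have "x \<in> C.finite_extension E xs"
        using C.finite_extension_mem[OF subfieldE(1)[OF E], of xs] that by auto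
      then show ?thesis by (rule C.finite_dimension_imp_algebraic[OF F sr fdim])
    qed
    then have "\<forall>x\<in>set (xs @ [t]). (C.algebraic over F) x" using t(1) by auto
    then show ?thesis using dim by blast
  qed
qed

lemma ext_bound:
  assumes E: "subfield E CR" and L: "subfield L CR" and EL: "E \<subseteq> L"
  shows "\<forall>x\<in>set xs. (C.algebraic over E) x \<Longrightarrow> C.dimension a E (C.finite_extension E xs)
     \<Longrightarrow> C.dimension b L (C.finite_extension L xs) \<Longrightarrow> b \<le> a"
proof (induction xs arbitrary: a b)
  case Nil
  have "a = 1" using C.dimension_is_inj[OF E] Nil(2) C.dimension_one[OF E] by simp
  moreover have "b = 1" using C.dimension_is_inj[OF L] Nil(3) C.dimension_one[OF L] by simp
  ultimately show ?case by simp
next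
  case (Cons x xs)
  define E' where "E' = C.finite_extension E xs"
  define L' where "L' = C.finite_extension L xs"
  have algE: "\<forall>y\<in>set xs. (C.algebraic over E) y" using Cons(2) by simp
  have algL: "\<forall>y\<in>set xs. (C.algebraic over L) y" using algE C.algebraic_mono[OF EL] by blast
  have sE': "subfield E' CR" unfolding E'_def
    by (rule C.finite_extension_is_subfield[OF E]) (use algE in auto)
  have sL': "subfield L' CR" unfolding L'_def
    by (rule C.finite_extension_is_subfield[OF L]) (use algL in auto)
  have E'L': "E' \<subseteq> L'" unfolding E'_def L'_def by (rule C.mono_finite_extension[OF EL])
  have EE': "E \<subseteq> E'" unfolding E'_def by (rule C.finite_extension_incl) auto
  obtain a0 where a0: "C.dimension a0 E E'"
    using C.finite_extension_finite_dimension(1)[OF E _ ] algE unfolding E'_def C.finite_dimension_def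
    by auto
  obtain b0 where b0: "C.dimension b0 L L'"
    using C.finite_extension_finite_dimension(1)[OF L _ ] algL unfolding L'_def C.finite_dimension_def
    by auto
  have IH: "b0 \<le> a0" using Cons.IH[OF algE a0[unfolded E'_def] b0[unfolded L'_def]] .
  have xE: "(C.algebraic over E') x" using C.algebraic_mono[OF EE'] Cons(2) by simp
  have xL: "(C.algebraic over L') x" using C.algebraic_mono[OF E'L' xE] .
  define dE where "dE = Polynomials.degree (C.Irr E' x)"
  define dL where "dL = Polynomials.degree (C.Irr L' x)"
  have "C.dimension (a0 * dE) E (C.simple_extension E' x)"
    using C.telescopic_base[OF E sE' a0 C.dimension_simple_extension[OF sE' _ xE]] unfolding dE_def
    by simp
  then have "a = a0 * dE" using C.dimension_is_inj[OF E] Cons(3) unfolding E'_def by simp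
  moreover have "C.dimension (b0 * dL) L (C.simple_extension L' x)"
    using C.telescopic_base[OF L sL' b0 C.dimension_simple_extension[OF sL' _ xL]] unfolding dL_def
    by simp
  then have "b = b0 * dL" using C.dimension_is_inj[OF L] Cons(4) unfolding L'_def by simp
  moreover have "dL \<le> dE"
  proof -
    have c1: "C.Irr E' x \<in> carrier (univ_poly CR E')" using C.IrrE(1)[OF sE' _ xE] by simp
    have c2: "C.Irr E' x \<in> carrier (univ_poly CR L')" by (rule univ_poly_carrier_mono[OF c1 E'L'])
    have ne: "C.Irr E' x \<noteq> []"
      using C.IrrE(1-2)[OF sE' _ xE] unfolding ring_irreducible_def univ_poly_zero by auto
    have ev: "C.eval (C.Irr E' x) x = \<zero>\<^bsub>CR\<^esub>" using C.IrrE(4)[OF sE' _ xE] by simp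
    have dv: "C.Irr L' x pdivides\<^bsub>CR\<^esub> C.Irr E' x"
      by (rule C.Irr_minimal[OF sL' _ xL c2 ev]) simp
    have c3: "C.Irr L' x \<in> carrier (univ_poly CR L')" using C.IrrE(1)[OF sL' _ xL] by simp
    show ?thesis unfolding dL_def dE_def
      by (rule C.pdivides_imp_degree_le[OF subfieldE(1)[OF sL'] c3 c2 ne dv])
  qed
  ultimately show ?case using IH by (simp add: mult_le_mono)
qed

lemma compositum_fe:
  assumes E: "subfield E CR" and L: "subfield L CR" and EL: "E \<subseteq> L"
    and alg: "\<forall>x\<in>set xs. (C.algebraic over E) x"
  shows "compositum L (C.finite_extension E xs) = C.finite_extension L xs"
    and "subfield (C.finite_extension L xs) CR"
proof -
  define M where "M = C.finite_extension L xs"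
  have algL: "\<forall>y\<in>set xs. (C.algebraic over L) y" using alg C.algebraic_mono[OF EL] by blast
  show sM: "subfield (C.finite_extension L xs) CR"
    by (rule C.finite_extension_is_subfield[OF L]) (use algL in auto)
  have LM: "L \<subseteq> M" unfolding M_def by (rule C.finite_extension_incl) auto
  have L'M: "C.finite_extension E xs \<subseteq> M" unfolding M_def by (rule C.mono_finite_extension[OF EL])
  have inF: "M \<subseteq> G" if G: "subfield_C G" "L \<union> C.finite_extension E xs \<subseteq> G" for G
  proof -
    have sG: "subring G CR" using subfieldE(1) G(1) unfolding subfield_C_iff by blast
    have "set xs \<subseteq> C.finite_extension E xs"
      by (rule C.finite_extension_mem[OF subfieldE(1)[OF E]]) simp
    then have xG: "set xs \<subseteq> G" using G(2) by blast
    have LG: "L \<subseteq> G" using G(2) by blast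
    show ?thesis unfolding M_def by (rule C.finite_extension_subring_incl[OF sG LG xG])
  qed
  have "subfield_C M" using sM unfolding M_def subfield_C_iff .
  then show "compositum L (C.finite_extension E xs) = C.finite_extension L xs"
    unfolding compositum_def M_def[symmetric] using LM L'M inF by blast
qed



lemma ext_degree_parts:
  assumes "ext_degree K L n"
  shows "subfield_C K" "subfield_C L" "K \<subseteq> L"
    "\<exists>v. \<forall>x\<in>L. \<exists>c. (\<forall>i<n. c i \<in> K) \<and> x = (\<Sum>i<n. c i * v i)"
  using assms unfolding ext_degree_def by blast+

lemma ext_degree_pos: assumes "ext_degree K L n" shows "0 < n"
proof (rule ccontr)
  assume "\<not> 0 < n"
  then have n: "n = 0" by simp
  have "1 \<in> L" using ext_degree_parts(2)[OF assms] unfolding subfield_C_def by blast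
  moreover obtain v where "\<forall>x\<in>L. \<exists>c. (\<forall>i<n. c i \<in> K) \<and> x = (\<Sum>i<n. c i * v i)"
    using ext_degree_parts(4)[OF assms] by blast
  ultimately obtain c where "(1::complex) = (\<Sum>i<n. c i * v i)" by blast
  then show False using n by simp
qed

lemma ext_degree_one: assumes "ext_degree K L 1" shows "L = K"
proof -
  have K: "subfield_C K" and L: "subfield_C L" and KL: "K \<subseteq> L"
    using ext_degree_parts[OF assms] by auto
  obtain v where v: "\<forall>x\<in>L. \<exists>c. (\<forall>i<(1::nat). c i \<in> K) \<and> x = (\<Sum>i<(1::nat). c i * v i)"
    using ext_degree_parts(4)[OF assms] by blast
  have sp: "\<exists>c\<in>K. x = c * v 0" if xL: "x \<in> L" for x
  proof -
    obtain c where "\<forall>i<(1::nat). c i \<in> K" "x = (\<Sum>i<(1::nat). c i * v i)" using v xL by blast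
    then show ?thesis by (intro bexI[of _ "c 0"]) auto
  qed
  have "1 \<in> L" using L unfolding subfield_C_def by auto
  then obtain c1 where c1: "c1 \<in> K" "1 = c1 * v 0" using sp by blast
  have "c1 \<noteq> 0" using c1 by auto
  then have "v 0 = inverse c1" using c1(2) by (metis inverse_unique mult.commute)
  then have v0: "v 0 \<in> K" using K c1 \<open>c1 \<noteq> 0\<close> unfolding subfield_C_def by auto
  have "L \<subseteq> K"
  proof
    fix x assume "x \<in> L"
    then obtain c where "c \<in> K" "x = c * v 0" using sp by blast
    then show "x \<in> K" using K v0 unfolding subfield_C_def by auto
  qed
  then show ?thesis using KL by blast
qed

lemma ext_degree_le:
  assumes "ext_degree K L x" "ext_degree K M z" "L \<subseteq> M" shows "x \<le> z"
proof -
  have K: "subfield K CR" and dL: "C.dimension x K L" and dM: "C.dimension z K M"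
    using assms(1,2) unfolding ext_degree_iff by auto
  obtain Us where Us: "C.independent K Us" "length Us = x" "C.Span K Us = L"
    using C.exists_base[OF K dL] by blast
  have cU: "set Us \<subseteq> carrier CR" by simp
  have "set Us \<subseteq> C.Span K Us" by (rule C.Span_base_incl[OF K cU])
  then have "set Us \<subseteq> L" unfolding Us(3) .
  then have "set Us \<subseteq> M" using assms(3) by blast
  then show ?thesis using C.independent_length_le_dimension[OF K dM Us(1)] Us(2) by simp
qed

lemma compositum_sup: "L \<subseteq> compositum L L'" "L' \<subseteq> compositum L L'"
  unfolding compositum_def by auto

lemma compositum_self: "subfield_C K \<Longrightarrow> compositum K K = K"
  unfolding compositum_def by auto

lemma compositum_commute: "compositum L L' = compositum L' L"
  unfolding compositum_def by (simp add: Un_commute)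

lemma feasible_props:
  assumes "(x, y, z) \<in> compositum_feasible K"
  shows "0 < x" "0 < y" "x \<le> z" "y \<le> z" "x = 1 \<Longrightarrow> y = 1 \<Longrightarrow> z = 1"
proof -
  obtain L L' where H: "ext_degree K L x" "ext_degree K L' y" "ext_degree K (compositum L L') z"
    using assms unfolding compositum_feasible_def by blast
  show "0 < x" "0 < y" using ext_degree_pos H by auto
  show "x \<le> z" using ext_degree_le[OF H(1) H(3) compositum_sup(1)] .
  show "y \<le> z" using ext_degree_le[OF H(2) H(3) compositum_sup(2)] .
  assume "x = 1" "y = 1"
  then have "L = K" "L' = K" using ext_degree_one H by auto
  moreover have K: "subfield_C K" using H(1) unfolding ext_degree_def by auto
  ultimately have Z: "ext_degree K K z" using H(3) compositum_self by simp
  have O: "ext_degree K K 1"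
    using K C.dimension_one[of K] unfolding ext_degree_iff subfield_C_iff by auto
  show "z = 1" using ext_degree_le[OF Z O] ext_degree_le[OF O Z] by simp
qed

lemma lcm_feasible:
  assumes K: "number_field K" and a: "0 < a" and b: "0 < b"
  shows "(a, b, lcm a b) \<in> compositum_feasible K"
proof -
  obtain d where "ext_degree \<rat> K d" using K unfolding number_field_def by blast
  then have sK: "subfield K CR" and QK: "\<rat> \<subseteq> K" and dK: "C.dimension d \<rat> K"
    unfolding ext_degree_iff by auto
  define g where "g = gcd a b"
  define a' where "a' = a div g"
  define b' where "b' = b div g"
  have g0: "0 < g" using a unfolding g_def by simp
  have aa: "a = g * a'" unfolding a'_def g_def by simp
  have bb: "b = g * b'" unfolding b'_def g_def by simp
  have a'0: "0 < a'" using a aa by (cases a') auto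
  have b'0: "0 < b'" using b bb by (cases b') auto
  have cop: "coprime a' b'" unfolding a'_def b'_def g_def using a by (simp add: div_gcd_coprime)
  have fdK: "C.finite_dimension \<rat> K" using dK unfolding C.finite_dimension_def by blast
  obtain zs where zs: "\<forall>x\<in>set zs. (C.algebraic over K) x" "C.dimension g K (C.finite_extension K zs)"
    using ext_exists[OF sK QK fdK g0] by blast
  define E where "E = C.finite_extension K zs"
  have sE: "subfield E CR" unfolding E_def
    by (rule C.finite_extension_is_subfield[OF sK]) (use zs(1) in auto)
  have KE: "K \<subseteq> E" unfolding E_def by (rule C.finite_extension_incl) auto
  have dE: "C.dimension (d * g) \<rat> E" using C.telescopic_base[OF Rats_subfield sK dK zs(2)]
    unfolding E_def .
  have fdE: "C.finite_dimension \<rat> E" using dE unfolding C.finite_dimension_def by blast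
  have QE: "\<rat> \<subseteq> E" using QK KE by blast
  obtain ys where ys: "\<forall>x\<in>set ys. (C.algebraic over E) x" "C.dimension a' E (C.finite_extension E ys)"
    using ext_exists[OF sE QE fdE a'0] by blast
  obtain xs where xs: "\<forall>x\<in>set xs. (C.algebraic over E) x" "C.dimension b' E (C.finite_extension E xs)"
    using ext_exists[OF sE QE fdE b'0] by blast
  define L where "L = C.finite_extension E ys"
  define L' where "L' = C.finite_extension E xs"
  have sL: "subfield L CR" unfolding L_def
    by (rule C.finite_extension_is_subfield[OF sE]) (use ys(1) in auto)
  have sL': "subfield L' CR" unfolding L'_def
    by (rule C.finite_extension_is_subfield[OF sE]) (use xs(1) in auto)
  have EL: "E \<subseteq> L" unfolding L_def by (rule C.finite_extension_incl) auto
  have EL': "E \<subseteq> L'" unfolding L'_def by (rule C.finite_extension_incl) auto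
  define M where "M = compositum L L'"
  have M1: "M = C.finite_extension L xs" and sM: "subfield M CR"
    using compositum_fe[OF sE sL EL xs(1)] unfolding M_def L'_def by auto
  have M2: "M = C.finite_extension L' ys"
    using compositum_fe[OF sE sL' EL' ys(1)] unfolding M_def L_def compositum_commute[of "C.finite_extension E ys"]
    by simp
  have xsL: "\<forall>x\<in>set xs. (C.algebraic over L) x" using xs(1) C.algebraic_mono[OF EL] by blast
  have ysL': "\<forall>x\<in>set ys. (C.algebraic over L') x" using ys(1) C.algebraic_mono[OF EL'] by blast
  obtain m where m: "C.dimension m L M"
    using C.finite_extension_finite_dimension(1)[OF sL _] xsL unfolding M1 C.finite_dimension_def
    by auto
  obtain m' where m': "C.dimension m' L' M"
    using C.finite_extension_finite_dimension(1)[OF sL' _] ysL' unfolding M2 C.finite_dimension_def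
    by auto
  have mb: "m \<le> b'" using ext_bound[OF sE sL EL xs(1) xs(2)] m unfolding M1 by simp
  have d1: "C.dimension (a' * m) E M" using C.telescopic_base[OF sE sL ys(2)[folded L_def] m] .
  have d2: "C.dimension (b' * m') E M" using C.telescopic_base[OF sE sL' xs(2)[folded L'_def] m'] .
  have eqd: "a' * m = b' * m'" using C.dimension_is_inj[OF sE d1 d2] .
  have m0: "m \<noteq> 0"
  proof
    assume "m = 0"
    then have "M = {0}" using C.dimension_zero[OF sL] m by simp
    moreover have "1 \<in> M" using subringE(3)[OF subfieldE(1)[OF sM]] by simp
    ultimately show False by simp
  qed
  have "b' dvd a' * m" using eqd by simp
  then have "b' dvd m" using cop by (simp add: coprime_dvd_mult_right_iff coprime_commute)
  then have "b' \<le> m" using m0 by (simp add: dvd_imp_le)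
  then have mb': "m = b'" using mb by simp
  have dL: "C.dimension a K L" unfolding aa L_def
    using C.telescopic_base[OF sK sE zs(2)[folded E_def] ys(2)] .
  have dL': "C.dimension b K L'" unfolding bb L'_def
    using C.telescopic_base[OF sK sE zs(2)[folded E_def] xs(2)] .
  have dM: "C.dimension (g * (a' * b')) K M"
    using C.telescopic_base[OF sK sE zs(2)[folded E_def] d1] mb' by simp
  have e1: "g * lcm a b = a * b" unfolding g_def by (rule prod_gcd_lcm_nat[symmetric])
  have e2: "a * b = g * (g * (a' * b'))" by (subst aa, subst bb) (simp only: mult_ac)
  have "g * (a' * b') = lcm a b" using e1 e2 g0 by simp
  then have dM': "C.dimension (lcm a b) K M" using dM by simp
  have KL: "K \<subseteq> L" using KE EL by blast
  have KL': "K \<subseteq> L'" using KE EL' by blast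
  have KM: "K \<subseteq> M" using KL compositum_sup(1)[of L L'] unfolding M_def by blast
  show ?thesis unfolding compositum_feasible_def
    using dL dL' dM' sK sL sL' sM KL KL' KM unfolding M_def ext_degree_iff by blast
qed



lemma triplet_mult_simp [simp]: "triplet_mult (x1, y1, z1) (x2, y2, z2) = (x1 * x2, y1 * y2, z1 * z2)"
  by (simp add: triplet_mult_def)

lemma red_intro:
  assumes "x \<in> compositum_feasible K" "y \<in> compositum_feasible K" "z \<in> compositum_feasible K"
    "y \<noteq> (1, 1, 1)" "z \<noteq> (1, 1, 1)" "x = triplet_mult y z"
  shows "triplet_reducible K x"
  using assms unfolding triplet_reducible_def by blast

lemma nonprime_split:
  assumes "1 < (n::nat)" "\<not> prime n"
  obtains u v where "n = u * v" "1 < u" "1 < v"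
proof -
  obtain m where m: "m dvd n" "m \<noteq> 1" "m \<noteq> n" using assms prime_nat_iff by blast
  then obtain k where k: "n = m * k" by blast
  have "m \<noteq> 0" using k assms(1) by (cases "m = 0") auto
  moreover have "k \<noteq> 0" using k assms(1) by (cases "k = 0") auto
  moreover have "k \<noteq> 1" using k m(3) by auto
  ultimately show ?thesis using that k m(2) by (metis One_nat_def less_one nat_neq_iff)
qed

lemma lcm_feasible':
  assumes "number_field K" "0 < x" "0 < y" "z = lcm x y"
  shows "(x, y, z) \<in> compositum_feasible K"
  using lcm_feasible[OF assms(1-3)] assms(4) by simp

theorem mainTheorem12:
  fixes K :: "complex set" and a b c t :: nat
  assumes "number_field K"
    and "a > 0" and "b > 0" and "t > 0"
    and "t dvd gcd a b" and "c = lcm a b * t"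
  shows "triplet_irreducible K (a, b, c) \<longleftrightarrow>
    (a, b, c) = (1, 1, 1) \<or>
    (\<exists>p::nat. prime p \<and> ((a, b, c) = (1, p, p) \<or> (a, b, c) = (p, 1, p) \<or> (a, b, c) = (p, p, p)))"
  (is "?irr \<longleftrightarrow> ?list")
proof -
  note K = assms(1) and a0 = assms(2) and b0 = assms(3) and t0 = assms(4)
    and tg = assms(5) and cc = assms(6)
  have feas: "(x, y, z) \<in> compositum_feasible K" if "0 < x" "0 < y" "z = lcm x y" for x y z
    using lcm_feasible'[OF K that] .
  show ?thesis
  proof
    assume irr: ?irr
    have fe: "(a, b, c) \<in> compositum_feasible K" using irr unfolding triplet_irreducible_def by blast
    show ?list
    proof (rule ccontr)
      assume nl: "\<not> ?list"
      define g where "g = gcd a b"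
      define a' where "a' = a div g"
      define b' where "b' = b div g"
      define s where "s = g div t"
      have g0: "0 < g" using a0 unfolding g_def by simp
      have aa: "a = g * a'" unfolding a'_def g_def by simp
      have bb: "b = g * b'" unfolding b'_def g_def by simp
      have gs: "g = t * s" unfolding s_def using tg unfolding g_def by simp
      have s0: "0 < s" using gs g0 by (cases s) auto
      have a'0: "0 < a'" using a0 aa by (cases a') auto
      have b'0: "0 < b'" using b0 bb by (cases b') auto
      have e1: "g * lcm a b = a * b" unfolding g_def by (rule prod_gcd_lcm_nat[symmetric])
      have lab: "lcm a b = a * b'" using e1 g0 bb by (metis mult.left_commute nat_mult_eq_cancel1)
      have lba: "lcm a b = b * a'" using e1 g0 aa by (metis mult.left_commute mult.commute nat_mult_eq_cancel1)
      have red: "triplet_reducible K (a, b, c)"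
      proof (cases "a \<noteq> 1 \<and> \<not> (b dvd a \<and> t = 1)")
        case True
        have sa: "s dvd a" using gs aa by (metis dvd_mult_left dvd_mult2 mult.commute dvd_triv_left)
        have y: "(a, s, a) \<in> compositum_feasible K"
          by (rule feas[OF a0 s0]) (use sa in \<open>simp add: lcm_proj1_if_dvd_nat\<close>)
        have z: "(1, b' * t, b' * t) \<in> compositum_feasible K"
          by (rule feas) (use b'0 t0 in auto)
        have zn: "(1, b' * t, b' * t) \<noteq> (1, 1, 1)"
        proof
          assume "(1, b' * t, b' * t) = (1, 1, 1)"
          then have "b' = 1" "t = 1" by auto
          then have "b dvd a" using bb aa by simp
          then show False using True \<open>t = 1\<close> by simp
        qed
        have yn: "(a, s, a) \<noteq> (1, 1, 1)" using True by simp
        have "(a, b, c) = triplet_mult (a, s, a) (1, b' * t, b' * t)"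
          using cc lab bb gs by (simp add: mult_ac)
        then show ?thesis by (rule red_intro[OF fe y z yn zn])
      next
        case nA: False
        show ?thesis
        proof (cases "b \<noteq> 1 \<and> \<not> (a dvd b \<and> t = 1)")
          case True
          have sb: "s dvd b" using gs bb by (metis dvd_mult_left dvd_mult2 mult.commute dvd_triv_left)
          have y: "(s, b, b) \<in> compositum_feasible K"
            by (rule feas[OF s0 b0]) (use sb in \<open>simp add: lcm_proj1_if_dvd_nat lcm.commute\<close>)
          have z: "(a' * t, 1, a' * t) \<in> compositum_feasible K"
            by (rule feas) (use a'0 t0 in auto)
          have zn: "(a' * t, 1, a' * t) \<noteq> (1, 1, 1)"
          proof
            assume "(a' * t, 1, a' * t) = (1, 1, 1)"
            then have "a' = 1" "t = 1" by auto
            then have "a dvd b" using bb aa by simp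
            then show False using True \<open>t = 1\<close> by simp
          qed
          have yn: "(s, b, b) \<noteq> (1, 1, 1)" using True by simp
          have "(a, b, c) = triplet_mult (s, b, b) (a' * t, 1, a' * t)"
            using cc lba aa gs by (simp add: mult_ac)
          then show ?thesis by (rule red_intro[OF fe y z yn zn])
        next
          case nB: False
          have A: "a = 1 \<or> (b dvd a \<and> t = 1)" using nA by blast
          have B: "b = 1 \<or> (a dvd b \<and> t = 1)" using nB by blast
          show ?thesis
          proof (cases "a = 1")
            case a1: True
            show ?thesis
            proof (cases "b = 1")
              case True
              then have "t = 1" using tg a1 by simp
              then have "(a, b, c) = (1, 1, 1)" using a1 True cc by simp
              then show ?thesis using nl by simp
            next
              case b1: False
              then have t1: "t = 1" using B by simp
              have c_eq: "c = b" using cc a1 t1 by simp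
              have np: "\<not> prime b" using nl a1 c_eq by blast
              obtain u v where uv: "b = u * v" "1 < u" "1 < v"
                using nonprime_split[of b] np b0 b1 by (metis One_nat_def less_one nat_neq_iff)
              have y: "(1, u, u) \<in> compositum_feasible K" by (rule feas) (use uv in auto)
              have z: "(1, v, v) \<in> compositum_feasible K" by (rule feas) (use uv in auto)
              have "(a, b, c) = triplet_mult (1, u, u) (1, v, v)" using a1 c_eq uv by simp
              moreover have "(1, u, u) \<noteq> (1, 1, 1)" "(1, v, v) \<noteq> (1, 1, 1)" using uv by auto
              ultimately show ?thesis using red_intro[OF fe y z] by blast
            qed
          next
            case a1: False
            then have t1: "t = 1" and ba: "b dvd a" using A by auto
            show ?thesis
            proof (cases "b = 1")
              case b1: True
              have c_eq: "c = a" using cc b1 t1 by simp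
              have np: "\<not> prime a" using nl b1 c_eq by blast
              obtain u v where uv: "a = u * v" "1 < u" "1 < v"
                using nonprime_split[of a] np a0 a1 by (metis One_nat_def less_one nat_neq_iff)
              have y: "(u, 1, u) \<in> compositum_feasible K" by (rule feas) (use uv in auto)
              have z: "(v, 1, v) \<in> compositum_feasible K" by (rule feas) (use uv in auto)
              have "(a, b, c) = triplet_mult (u, 1, u) (v, 1, v)" using b1 c_eq uv by simp
              moreover have "(u, 1, u) \<noteq> (1, 1, 1)" "(v, 1, v) \<noteq> (1, 1, 1)" using uv by auto
              ultimately show ?thesis using red_intro[OF fe y z] by blast
            next
              case b1: False
              then have ab: "a dvd b" using B by simp
              have ab': "a = b" using ab ba by (simp add: dvd_antisym)
              have c_eq: "c = a" using cc ab' t1 by simp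
              have np: "\<not> prime a" using nl ab' c_eq by blast
              obtain u v where uv: "a = u * v" "1 < u" "1 < v"
                using nonprime_split[of a] np a0 a1 by (metis One_nat_def less_one nat_neq_iff)
              have y: "(u, u, u) \<in> compositum_feasible K" by (rule feas) (use uv in auto)
              have z: "(v, v, v) \<in> compositum_feasible K" by (rule feas) (use uv in auto)
              have "(a, b, c) = triplet_mult (u, u, u) (v, v, v)" using ab' c_eq uv by simp
              moreover have "(u, u, u) \<noteq> (1, 1, 1)" "(v, v, v) \<noteq> (1, 1, 1)" using uv by auto
              ultimately show ?thesis using red_intro[OF fe y z] by blast
            qed
          qed
        qed
      qed
      then show False using irr unfolding triplet_irreducible_def by blast
    qed
  next
    assume L: ?list
    have cl: "c = lcm a b"
      using L by auto
    have cp: "c = 1 \<or> prime c" using L by auto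
    have fe: "(a, b, c) \<in> compositum_feasible K" by (rule feas[OF a0 b0 cl])
    have nred: "\<not> triplet_reducible K (a, b, c)"
    proof
      assume "triplet_reducible K (a, b, c)"
      then obtain y z where y: "y \<in> compositum_feasible K" "y \<noteq> (1, 1, 1)"
        and z: "z \<in> compositum_feasible K" "z \<noteq> (1, 1, 1)" and yz: "(a, b, c) = triplet_mult y z"
        unfolding triplet_reducible_def by blast
      obtain a1 b1 c1 where y1: "y = (a1, b1, c1)" by (cases y) auto
      obtain a2 b2 c2 where z1: "z = (a2, b2, c2)" by (cases z) auto
      have c12: "c = c1 * c2" using yz y1 z1 by simp
      have triv: "q = (1, 1, 1)" if "q = (x1, x2, x3)" "q \<in> compositum_feasible K" "x3 = 1"
        for q x1 x2 x3
      proof -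
        have "x1 = 1" using feasible_props(1,3)[of x1 x2 x3 K] that by simp
        moreover have "x2 = 1" using feasible_props(2,4)[of x1 x2 x3 K] that by simp
        ultimately show ?thesis using that by simp
      qed
      have "c1 = 1 \<or> c2 = 1" using cp c12 prime_product by auto
      then show False using triv[OF y1 y(1)] triv[OF z1 z(1)] y(2) z(2) by blast
    qed
    show ?irr unfolding triplet_irreducible_def using fe nred by blast
  qed
qed


end
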